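(* Let $G$ be a group regarded as a large scale group whose bornology consists of all finite subsets of $G$. If $G$ has exactly two ends, then $G$ is finitely generated, and consequently $G$ contains an infinite cyclic subgroup of finite index.
   Context: For a group $G$ with the bornology of all finite subsets, the uniformly bounded covers are the covers refining $\{gF\}_{g\in G}$ for some finite $F\subseteq G$, and the bounded sets are the finite sets. For $A\subseteq G$ and a cover $\mathcal U$, $st(A,\mathcal U)$ is the union of members of $\mathcal U$ meeting $A$; $A$ is coarsely clopen if $st(A,\mathcal U)\cap st(G\setminus A,\mathcal U)$ is finite for every uniformly bounded $\mathcal U$. An end of $G$ is a family of infinite coarsely clopen subsets of $G$ maximal with respect to the property that all finite intersections of its members are infinite. *)

theory Defs
  imports "HOL-Algebra.Algebra"
begin

definition is_cover :: "('a, 'b) monoid_scheme \<Rightarrow> 'a set set \<Rightarrow> bool" where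
  "is_cover G \<U> \<longleftrightarrow> (\<forall>U\<in>\<U>. U \<subseteq> carrier G) \<and> \<Union>\<U> = carrier G"

definition unif_bounded_cover :: "('a, 'b) monoid_scheme \<Rightarrow> 'a set set \<Rightarrow> bool" where
  "unif_bounded_cover G \<U> \<longleftrightarrow> is_cover G \<U> \<and>
     (\<exists>F. finite F \<and> F \<subseteq> carrier G \<and>
        (\<forall>U\<in>\<U>. \<exists>g\<in>carrier G. U \<subseteq> g <#\<^bsub>G\<^esub> F))"

definition star :: "'a set \<Rightarrow> 'a set set \<Rightarrow> 'a set" where
  "star A \<U> = \<Union>{U\<in>\<U>. U \<inter> A \<noteq> {}}"

definition coarsely_clopen :: "('a, 'b) monoid_scheme \<Rightarrow> 'a set \<Rightarrow> bool" where
  "coarsely_clopen G A \<longleftrightarrow> A \<subseteq> carrier G \<and>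
     (\<forall>\<U>. unif_bounded_cover G \<U> \<longrightarrow> finite (star A \<U> \<inter> star (carrier G - A) \<U>))"

definition end_candidate :: "('a, 'b) monoid_scheme \<Rightarrow> 'a set set \<Rightarrow> bool" where
  "end_candidate G \<E> \<longleftrightarrow>
     (\<forall>A\<in>\<E>. infinite A \<and> coarsely_clopen G A) \<and>
     (\<forall>\<F>. \<F> \<subseteq> \<E> \<and> finite \<F> \<and> \<F> \<noteq> {} \<longrightarrow> infinite (\<Inter>\<F>))"

definition is_end :: "('a, 'b) monoid_scheme \<Rightarrow> 'a set set \<Rightarrow> bool" where
  "is_end G \<E> \<longleftrightarrow> \<E> \<noteq> {} \<and> end_candidate G \<E> \<and>
     (\<forall>\<E>'. end_candidate G \<E>' \<and> \<E> \<subseteq> \<E>' \<longrightarrow> \<E>' = \<E>)"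

definition ends :: "('a, 'b) monoid_scheme \<Rightarrow> 'a set set set" where
  "ends G = {\<E>. is_end G \<E>}"

end

theory Submission
  imports Defs "HOL-Library.Infinite_Set"
begin


definition sd :: "'a set \<Rightarrow> 'a set \<Rightarrow> 'a set" where "sd P Q = (P - Q) \<union> (Q - P)"

lemma eqf_sym: "finite (sd W Y) \<Longrightarrow> finite (sd Y W)"
  by (simp add: sd_def Un_commute)
lemma eqf_trans: "finite (sd W Y) \<Longrightarrow> finite (sd Y Z) \<Longrightarrow> finite (sd W Z)"
  by (rule finite_subset[of _ "sd W Y \<union> sd Y Z"]) (auto simp: sd_def)

definition rm :: "('a, 'b) monoid_scheme \<Rightarrow> 'a set \<Rightarrow> 'a \<Rightarrow> 'a set" where
  "rm G W s = (\<lambda>x. x \<otimes>\<^bsub>G\<^esub> s) ` W"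
definition lm :: "('a, 'b) monoid_scheme \<Rightarrow> 'a \<Rightarrow> 'a set \<Rightarrow> 'a set" where
  "lm G z W = (\<lambda>x. z \<otimes>\<^bsub>G\<^esub> x) ` W"

definition ari :: "('a, 'b) monoid_scheme \<Rightarrow> 'a set \<Rightarrow> bool" where
  "ari G A \<longleftrightarrow> A \<subseteq> carrier G \<and> (\<forall>s\<in>carrier G. finite (sd (rm G A s) A))"

context group begin

lemma rm_bad_finite:
  assumes "ari G A" "t \<in> carrier G"
  shows "finite {x\<in>A. x \<otimes> t \<notin> A}"
proof -
  have "{x\<in>A. x \<otimes> t \<notin> A} \<subseteq> (\<lambda>y. y \<otimes> inv t) ` (rm G A t - A)"
  proof
    fix x assume x: "x \<in> {x\<in>A. x \<otimes> t \<notin> A}"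
    have xc: "x \<in> carrier G" using x assms(1) by (auto simp: ari_def)
    have "x = (x \<otimes> t) \<otimes> inv t" using xc assms(2) by (simp add: m_assoc)
    moreover have "x \<otimes> t \<in> rm G A t - A" using x by (auto simp: rm_def)
    ultimately show "x \<in> (\<lambda>y. y \<otimes> inv t) ` (rm G A t - A)" by blast
  qed
  moreover have "finite (rm G A t - A)"
    using assms by (auto simp: ari_def sd_def)
  ultimately show ?thesis by (meson finite_imageI finite_subset)
qed

lemma ari_imp_cc:
  assumes "ari G A" shows "coarsely_clopen G A"
  unfolding coarsely_clopen_def
proof (intro conjI allI impI)
  show "A \<subseteq> carrier G" using assms by (simp add: ari_def)
  fix U assume ub: "unif_bounded_cover G U"
  then obtain F where F: "finite F" "F \<subseteq> carrier G" and UF: "\<forall>V\<in>U. \<exists>g\<in>carrier G. V \<subseteq> g <# F"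
    and cov: "is_cover G U" unfolding unif_bounded_cover_def by blast
  have Ucar: "\<forall>V\<in>U. V \<subseteq> carrier G" using cov by (simp add: is_cover_def)
  define T where "T = (\<lambda>(u,v,w,x). ((inv u \<otimes> v) \<otimes> inv w) \<otimes> x) ` (F \<times> F \<times> F \<times> F)"
  have Tfin: "finite T" unfolding T_def using F by simp
  have Tcar: "T \<subseteq> carrier G" unfolding T_def using F(2) by (auto intro!: m_closed inv_closed dest: subsetD)
  define Bd where "Bd = (\<Union>t\<in>T. {x\<in>A. x \<otimes> t \<notin> A})"
  have Bdfin: "finite Bd" unfolding Bd_def using Tfin Tcar rm_bad_finite[OF assms] by auto
  have "star A U \<inter> star (carrier G - A) U \<subseteq> (\<lambda>(x,u,v). (x \<otimes> inv u) \<otimes> v) ` (Bd \<times> F \<times> F)"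
  proof
    fix y assume "y \<in> star A U \<inter> star (carrier G - A) U"
    then obtain U1 U2 where U1: "U1 \<in> U" "y \<in> U1" "U1 \<inter> A \<noteq> {}" and U2: "U2 \<in> U" "y \<in> U2" "U2 \<inter> (carrier G - A) \<noteq> {}"
      unfolding star_def by blast
    obtain g1 where g1: "g1 \<in> carrier G" "U1 \<subseteq> g1 <# F" using UF U1 by blast
    obtain g2 where g2: "g2 \<in> carrier G" "U2 \<subseteq> g2 <# F" using UF U2 by blast
    obtain a where a: "a \<in> U1" "a \<in> A" using U1 by blast
    obtain b where b: "b \<in> U2" "b \<notin> A" using U2 by blast
    obtain f1 where f1: "f1 \<in> F" "y = g1 \<otimes> f1" using g1 U1 by (auto simp: l_coset_def)
    obtain f3 where f3: "f3 \<in> F" "a = g1 \<otimes> f3" using g1 a by (auto simp: l_coset_def)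
    obtain f2 where f2: "f2 \<in> F" "y = g2 \<otimes> f2" using g2 U2 by (auto simp: l_coset_def)
    obtain f4 where f4: "f4 \<in> F" "b = g2 \<otimes> f4" using g2 b by (auto simp: l_coset_def)
    have c: "f1 \<in> carrier G" "f2 \<in> carrier G" "f3 \<in> carrier G" "f4 \<in> carrier G" using f1 f2 f3 f4 F by auto
    have ga: "a \<otimes> inv f3 = g1" using f3 c g1 by (simp add: m_assoc)
    have gy: "y \<otimes> inv f2 = g2" using f2 c g2 by (simp add: m_assoc)
    have yy: "y = (a \<otimes> inv f3) \<otimes> f1" using ga f1 by simp
    define t where "t = ((inv f3 \<otimes> f1) \<otimes> inv f2) \<otimes> f4"
    have tT: "t \<in> T" unfolding T_def t_def using f1 f2 f3 f4 by (intro image_eqI[of _ _ "(f3,f1,f2,f4)"]) auto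
    have ac: "a \<in> carrier G" using a assms by (auto simp: ari_def)
    have "a \<otimes> t = (((a \<otimes> inv f3) \<otimes> f1) \<otimes> inv f2) \<otimes> f4"
      unfolding t_def using ac c by (simp add: m_assoc)
    also have "\<dots> = b" using yy gy f4 by simp
    finally have "a \<otimes> t = b" .
    hence "a \<in> Bd" unfolding Bd_def using tT a b by blast
    thus "y \<in> (\<lambda>(x,u,v). (x \<otimes> inv u) \<otimes> v) ` (Bd \<times> F \<times> F)"
      using yy f3 f1 by force
  qed
  moreover have "finite ((\<lambda>(x,u,v). (x \<otimes> inv u) \<otimes> v) ` (Bd \<times> F \<times> F))"
    using Bdfin F by simp
  ultimately show "finite (star A U \<inter> star (carrier G - A) U)" by (rule finite_subset)
qed

lemma cc_imp_ari:
  assumes "coarsely_clopen G A" shows "ari G A"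
  unfolding ari_def
proof (intro conjI ballI)
  show Ac: "A \<subseteq> carrier G" using assms by (simp add: coarsely_clopen_def)
  fix s assume s: "s \<in> carrier G"
  define U where "U = (\<lambda>g. g <# {\<one>, s}) ` carrier G"
  have lc: "\<And>g. g \<in> carrier G \<Longrightarrow> g <# {\<one>, s} = {g, g \<otimes> s}"
    by (auto simp: l_coset_def)
  have "unif_bounded_cover G U"
    unfolding unif_bounded_cover_def is_cover_def
  proof (intro conjI)
    show "\<forall>V\<in>U. V \<subseteq> carrier G" using lc s by (auto simp: U_def)
    show "\<Union> U = carrier G"
    proof
      show "\<Union> U \<subseteq> carrier G" using lc s by (auto simp: U_def)
      show "carrier G \<subseteq> \<Union> U" using lc unfolding U_def by blast
    qed
    show "\<exists>F. finite F \<and> F \<subseteq> carrier G \<and> (\<forall>V\<in>U. \<exists>g\<in>carrier G. V \<subseteq> g <# F)"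
      by (rule exI[of _ "{\<one>, s}"]) (use s in \<open>auto simp: U_def\<close>)
  qed
  hence fin: "finite (star A U \<inter> star (carrier G - A) U)"
    using assms by (simp add: coarsely_clopen_def)
  have key: "\<And>x. x \<in> carrier G \<Longrightarrow> (x \<in> A) \<noteq> (x \<otimes> s \<in> A) \<Longrightarrow>
      x \<otimes> s \<in> star A U \<inter> star (carrier G - A) U"
  proof -
    fix x assume x: "x \<in> carrier G" "(x \<in> A) \<noteq> (x \<otimes> s \<in> A)"
    have V: "{x, x \<otimes> s} \<in> U" using lc x unfolding U_def by (metis image_eqI)
    have "{x, x \<otimes> s} \<inter> A \<noteq> {}" "{x, x \<otimes> s} \<inter> (carrier G - A) \<noteq> {}"
      using x s by auto
    thus "x \<otimes> s \<in> star A U \<inter> star (carrier G - A) U" using V unfolding star_def by blast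
  qed
  have "sd (rm G A s) A \<subseteq> star A U \<inter> star (carrier G - A) U"
  proof
    fix y assume y: "y \<in> sd (rm G A s) A"
    show "y \<in> star A U \<inter> star (carrier G - A) U"
    proof (cases "y \<in> A")
      case True
      then have yc: "y \<in> carrier G" using Ac by auto
      define x where "x = y \<otimes> inv s"
      have xc: "x \<in> carrier G" and xs: "x \<otimes> s = y" using yc s by (auto simp: x_def m_assoc)
      have "x \<notin> A" using y True xs by (auto simp: sd_def rm_def)
      thus ?thesis using key[OF xc] xs True by auto
    next
      case False
      then obtain x where x: "x \<in> A" "y = x \<otimes> s" using y by (auto simp: sd_def rm_def)
      thus ?thesis using key[of x] False Ac by auto
    qed
  qed
  thus "finite (sd (rm G A s) A)" using fin by (rule finite_subset)
qed

lemma cc_iff_ari: "coarsely_clopen G A \<longleftrightarrow> ari G A"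
  using cc_imp_ari ari_imp_cc by blast

lemma rm_compl:
  assumes "s \<in> carrier G" "A \<subseteq> carrier G"
  shows "rm G (carrier G - A) s = carrier G - rm G A s"
proof
  show "rm G (carrier G - A) s \<subseteq> carrier G - rm G A s"
    using assms by (auto simp: rm_def)
  show "carrier G - rm G A s \<subseteq> rm G (carrier G - A) s"
  proof
    fix y assume y: "y \<in> carrier G - rm G A s"
    have "y = (y \<otimes> inv s) \<otimes> s" using y assms by (simp add: m_assoc)
    moreover have "y \<otimes> inv s \<notin> A" using y assms \<open>y = (y \<otimes> inv s) \<otimes> s\<close>
      by (metis DiffD2 image_eqI rm_def)
    ultimately show "y \<in> rm G (carrier G - A) s" unfolding rm_def using y assms by blast
  qed
qed

lemma sd_compl: "P \<subseteq> C \<Longrightarrow> Q \<subseteq> C \<Longrightarrow> sd (C - P) (C - Q) = sd P Q"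
  by (auto simp: sd_def)

lemma rm_sub: "A \<subseteq> carrier G \<Longrightarrow> s \<in> carrier G \<Longrightarrow> rm G A s \<subseteq> carrier G"
  by (auto simp: rm_def)

lemma ari_compl: assumes "ari G A" shows "ari G (carrier G - A)"
  unfolding ari_def
proof (intro conjI ballI)
  show "carrier G - A \<subseteq> carrier G" by auto
  fix s assume s: "s \<in> carrier G"
  have A: "A \<subseteq> carrier G" using assms by (simp add: ari_def)
  have "sd (rm G (carrier G - A) s) (carrier G - A) = sd (rm G A s) A"
    using rm_compl[OF s A] sd_compl[OF rm_sub[OF A s] A] by simp
  thus "finite (sd (rm G (carrier G - A) s) (carrier G - A))" using assms s by (simp add: ari_def)
qed

end


context group begin

lemma ari_Int: assumes "ari G A" "ari G B" shows "ari G (A \<inter> B)"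
  unfolding ari_def
proof (intro conjI ballI)
  show "A \<inter> B \<subseteq> carrier G" using assms by (auto simp: ari_def)
  fix s assume s: "s \<in> carrier G"
  have "sd (rm G (A \<inter> B) s) (A \<inter> B) \<subseteq> sd (rm G A s) A \<union> sd (rm G B s) B"
  proof
    fix y assume y: "y \<in> sd (rm G (A \<inter> B) s) (A \<inter> B)"
    show "y \<in> sd (rm G A s) A \<union> sd (rm G B s) B"
    proof (cases "y \<in> A \<inter> B")
      case True
      then have yc: "y \<in> carrier G" using assms by (auto simp: ari_def)
      have "y \<otimes> inv s \<notin> A \<inter> B"
      proof
        assume "y \<otimes> inv s \<in> A \<inter> B"
        moreover have "(y \<otimes> inv s) \<otimes> s = y" using yc s by (simp add: m_assoc)
        ultimately have "y \<in> rm G (A \<inter> B) s" unfolding rm_def by (metis image_eqI)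
        thus False using y True by (simp add: sd_def)
      qed
      moreover have "y \<otimes> inv s \<notin> A \<Longrightarrow> y \<notin> rm G A s"
        using yc s assms unfolding rm_def ari_def
        by (auto simp: m_assoc)
      moreover have "y \<otimes> inv s \<notin> B \<Longrightarrow> y \<notin> rm G B s"
        using yc s assms unfolding rm_def ari_def
        by (auto simp: m_assoc)
      ultimately show ?thesis using True by (auto simp: sd_def)
    next
      case False
      then obtain x where x: "x \<in> A" "x \<in> B" "y = x \<otimes> s" using y by (auto simp: sd_def rm_def)
      thus ?thesis using False by (auto simp: sd_def rm_def)
    qed
  qed
  thus "finite (sd (rm G (A \<inter> B) s) (A \<inter> B))"
    using assms s by (auto simp: ari_def intro: finite_subset)
qed

lemma end_sub: assumes "is_end G \<E>" "A \<in> \<E>" shows "A \<subseteq> carrier G \<and> infinite A \<and> ari G A"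
proof -
  have "infinite A \<and> coarsely_clopen G A" using assms unfolding is_end_def end_candidate_def by blast
  thus ?thesis using cc_imp_ari[of A] by (simp add: coarsely_clopen_def)
qed

lemma end_fip: "is_end G \<E> \<Longrightarrow> \<F> \<subseteq> \<E> \<Longrightarrow> finite \<F> \<Longrightarrow> \<F> \<noteq> {} \<Longrightarrow> infinite (\<Inter>\<F>)"
  unfolding is_end_def end_candidate_def by blast

lemma end_add:
  assumes E: "is_end G \<E>" and A: "infinite A" "ari G A"
    and fip: "\<And>\<F>. \<F> \<subseteq> \<E> \<Longrightarrow> finite \<F> \<Longrightarrow> infinite (A \<inter> \<Inter>\<F>)"
  shows "A \<in> \<E>"
proof -
  have m: "\<forall>B\<in>insert A \<E>. infinite B \<and> coarsely_clopen G B"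
    using A E ari_imp_cc unfolding is_end_def end_candidate_def by blast
  have f: "\<forall>\<F>. \<F> \<subseteq> insert A \<E> \<and> finite \<F> \<and> \<F> \<noteq> {} \<longrightarrow> infinite (\<Inter>\<F>)"
  proof (intro allI impI)
    fix \<F> assume F: "\<F> \<subseteq> insert A \<E> \<and> finite \<F> \<and> \<F> \<noteq> {}"
    show "infinite (\<Inter>\<F>)"
    proof (cases "A \<in> \<F>")
      case True
      then have "\<Inter>\<F> = A \<inter> \<Inter>(\<F> - {A})" by blast
      moreover have "\<F> - {A} \<subseteq> \<E>" "finite (\<F> - {A})" using F by auto
      ultimately show ?thesis using fip by simp
    next
      case False
      then have "\<F> \<subseteq> \<E>" using F by blast
      thus ?thesis using F E end_fip by blast
    qed
  qed
  have "end_candidate G (insert A \<E>)" unfolding end_candidate_def using m f by blast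
  hence "insert A \<E> = \<E>" using E unfolding is_end_def by blast
  thus ?thesis by blast
qed

lemma end_split:
  assumes E: "is_end G \<E>" and A: "ari G A" "infinite A" "infinite (carrier G - A)"
  shows "A \<in> \<E> \<or> carrier G - A \<in> \<E>"
proof (rule ccontr)
  assume "\<not> (A \<in> \<E> \<or> carrier G - A \<in> \<E>)"
  hence n1: "A \<notin> \<E>" and n2: "carrier G - A \<notin> \<E>" by auto
  obtain F1 where F1: "F1 \<subseteq> \<E>" "finite F1" "finite (A \<inter> \<Inter>F1)"
    using end_add[OF E A(2,1)] n1 by blast
  obtain F2 where F2: "F2 \<subseteq> \<E>" "finite F2" "finite ((carrier G - A) \<inter> \<Inter>F2)"
    using end_add[OF E A(3) ari_compl[OF A(1)]] n2 by blast
  show False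
  proof (cases "F1 \<union> F2 = {}")
    case True
    then show ?thesis using F1 A by simp
  next
    case False
    obtain B where B: "B \<in> F1 \<union> F2" using False by blast
    have "B \<subseteq> carrier G" using B F1 F2 end_sub[OF E, of B] by blast
    hence "\<Inter>(F1 \<union> F2) \<subseteq> carrier G" using B by blast
    hence "\<Inter>(F1 \<union> F2) \<subseteq> (A \<inter> \<Inter>F1) \<union> ((carrier G - A) \<inter> \<Inter>F2)" by blast
    hence "finite (\<Inter>(F1 \<union> F2))" using F1 F2 finite_subset by blast
    thus False using end_fip[OF E, of "F1 \<union> F2"] False F1 F2 by blast
  qed
qed

lemma end_cofinite:
  assumes E: "is_end G \<E>" and A: "ari G A" "finite (carrier G - A)"
  shows "A \<in> \<E>"
proof -
  obtain B where B: "B \<in> \<E>" using E unfolding is_end_def by blast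
  have inf: "infinite (carrier G)" using end_sub[OF E B] finite_subset by blast
  have Ac: "A \<subseteq> carrier G" using A by (simp add: ari_def)
  have Ainf: "infinite A"
  proof
    assume "finite A"
    hence "finite (A \<union> (carrier G - A))" using A by simp
    moreover have "A \<union> (carrier G - A) = carrier G" using Ac by blast
    ultimately show False using inf by simp
  qed
  show ?thesis
  proof (rule end_add[OF E Ainf A(1)])
    fix \<F> assume F: "\<F> \<subseteq> \<E>" "finite \<F>"
    show "infinite (A \<inter> \<Inter>\<F>)"
    proof (cases "\<F> = {}")
      case True thus ?thesis using Ainf by simp
    next
      case False
      have i: "infinite (\<Inter>\<F>)" using end_fip[OF E F False] .
      obtain B where B: "B \<in> \<F>" using False by blast
      have "B \<subseteq> carrier G" using B F end_sub[OF E, of B] by blast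
      hence "\<Inter>\<F> \<subseteq> carrier G" using B by blast
      hence "\<Inter>\<F> - (carrier G - A) \<subseteq> A \<inter> \<Inter>\<F>" by blast
      moreover have "infinite (\<Inter>\<F> - (carrier G - A))" using i A(2) by simp
      ultimately show ?thesis using finite_subset by blast
    qed
  qed
qed

lemma end_exists:
  assumes P: "infinite P" "ari G P"
  shows "\<exists>\<E>. is_end G \<E> \<and> P \<in> \<E>"
proof -
  define \<C> where "\<C> = {\<E>. end_candidate G \<E> \<and> P \<in> \<E>}"
  have P1: "{P} \<in> \<C>" unfolding \<C>_def end_candidate_def
    using P ari_imp_cc by (auto simp: subset_singleton_iff)
  have "\<forall>C\<in>chains \<C>. \<exists>U\<in>\<C>. \<forall>Y\<in>C. Y \<subseteq> U"
  proof
    fix C assume C: "C \<in> chains \<C>"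
    show "\<exists>U\<in>\<C>. \<forall>Y\<in>C. Y \<subseteq> U"
    proof (cases "C = {}")
      case True thus ?thesis using P1 by blast
    next
      case False
      have sub: "C \<subseteq> \<C>" using C by (simp add: chains_def)
      have ch: "subset.chain \<C> C" using C by (simp add: chains_alt_def)
      have m: "\<forall>A\<in>\<Union>C. infinite A \<and> coarsely_clopen G A"
        using sub unfolding \<C>_def end_candidate_def by blast
      have f: "\<forall>\<F>. \<F> \<subseteq> \<Union>C \<and> finite \<F> \<and> \<F> \<noteq> {} \<longrightarrow> infinite (\<Inter>\<F>)"
      proof (intro allI impI)
        fix \<F> assume F: "\<F> \<subseteq> \<Union>C \<and> finite \<F> \<and> \<F> \<noteq> {}"
        then obtain B where "B \<in> C" "\<F> \<subseteq> B"
          using finite_subset_Union_chain[of \<F> C \<C>] ch False by blast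
        thus "infinite (\<Inter>\<F>)" using F sub unfolding \<C>_def end_candidate_def by blast
      qed
      have "P \<in> \<Union>C" using False sub unfolding \<C>_def by blast
      hence "\<Union>C \<in> \<C>" unfolding \<C>_def end_candidate_def using m f by blast
      thus ?thesis by blast
    qed
  qed
  then obtain M where M: "M \<in> \<C>" "\<forall>Y\<in>\<C>. M \<subseteq> Y \<longrightarrow> Y = M"
    using Zorn_Lemma2[of \<C>] by blast
  have "is_end G M" unfolding is_end_def
  proof (intro conjI allI impI)
    show "M \<noteq> {}" using M unfolding \<C>_def by blast
    show "end_candidate G M" using M unfolding \<C>_def by blast
    fix E' assume "end_candidate G E' \<and> M \<subseteq> E'"
    thus "E' = M" using M unfolding \<C>_def by blast
  qed
  thus ?thesis using M unfolding \<C>_def by blast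
qed

end


context group begin

lemma three_ends_False:
  assumes fin: "finite (ends G)" and c: "card (ends G) \<le> 2"
    and Q: "ari G Q1" "ari G Q2" "ari G Q3" "infinite Q1" "infinite Q2" "infinite Q3"
    and d: "Q1 \<inter> Q2 = {}" "Q1 \<inter> Q3 = {}" "Q2 \<inter> Q3 = {}"
  shows False
proof -
  obtain E1 where E1: "is_end G E1" "Q1 \<in> E1" using end_exists Q by blast
  obtain E2 where E2: "is_end G E2" "Q2 \<in> E2" using end_exists Q by blast
  obtain E3 where E3: "is_end G E3" "Q3 \<in> E3" using end_exists Q by blast
  have ne: "\<And>E P R. is_end G E \<Longrightarrow> P \<in> E \<Longrightarrow> R \<in> E \<Longrightarrow> P \<inter> R = {} \<Longrightarrow> False"
  proof -
    fix E P R assume "is_end G E" "P \<in> E" "R \<in> E" "P \<inter> R = {}"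
    thus False using end_fip[of E "{P,R}"] by auto
  qed
  have "E1 \<noteq> E2" "E1 \<noteq> E3" "E2 \<noteq> E3" using ne E1 E2 E3 d by metis+
  moreover have "{E1, E2, E3} \<subseteq> ends G" using E1 E2 E3 by (auto simp: ends_def)
  ultimately have "card {E1, E2, E3} \<le> card (ends G)" using fin card_mono by blast
  moreover have "card {E1, E2, E3} = 3" using \<open>E1 \<noteq> E2\<close> \<open>E1 \<noteq> E3\<close> \<open>E2 \<noteq> E3\<close> by simp
  ultimately show False using c by simp
qed

theorem two_ends_E:
  assumes fin: "finite (ends G)" and c: "card (ends G) = 2"
  shows "\<exists>E. ari G E \<and> infinite E \<and> infinite (carrier G - E) \<and>
    (\<forall>A. ari G A \<longrightarrow> finite A \<or> finite (carrier G - A) \<or> finite (sd A E) \<or> finite (sd A (carrier G - E)))"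
proof -
  obtain E1 E2 where E12: "E1 \<noteq> E2" "ends G = {E1, E2}" using c by (meson card_2_iff)
  have e1: "is_end G E1" and e2: "is_end G E2" using E12 by (auto simp: ends_def)
  have "\<not> E1 \<subseteq> E2"
  proof
    assume "E1 \<subseteq> E2"
    moreover have "end_candidate G E2" using e2 by (simp add: is_end_def)
    ultimately have "E2 = E1" using e1 unfolding is_end_def by blast
    thus False using E12 by simp
  qed
  then obtain A where A: "A \<in> E1" "A \<notin> E2" by blast
  have Ap: "A \<subseteq> carrier G" "infinite A" "ari G A" using end_sub[OF e1 A(1)] by auto
  have Ac: "infinite (carrier G - A)" using end_cofinite[OF e2 Ap(3)] A(2) by blast
  have four: "\<forall>C. ari G C \<longrightarrow> finite C \<or> finite (carrier G - C) \<or> finite (sd C A) \<or> finite (sd C (carrier G - A))"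
  proof (intro allI impI)
    fix C assume C: "ari G C"
    have Cc: "C \<subseteq> carrier G" using C by (simp add: ari_def)
    show "finite C \<or> finite (carrier G - C) \<or> finite (sd C A) \<or> finite (sd C (carrier G - A))"
    proof (rule ccontr)
      assume H: "\<not> (finite C \<or> finite (carrier G - C) \<or> finite (sd C A) \<or> finite (sd C (carrier G - A)))"
      define P1 where "P1 = C \<inter> A"
      define P2 where "P2 = C \<inter> (carrier G - A)"
      define P3 where "P3 = A \<inter> (carrier G - C)"
      define P4 where "P4 = (carrier G - A) \<inter> (carrier G - C)"
      have a: "ari G P1" "ari G P2" "ari G P3" "ari G P4"
        unfolding P1_def P2_def P3_def P4_def using C Ap ari_Int ari_compl by auto
      have u: "A = P1 \<union> P3" "carrier G - A = P2 \<union> P4" "C = P1 \<union> P2" "carrier G - C = P3 \<union> P4"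
        "sd C A = P2 \<union> P3" "sd C (carrier G - A) = P1 \<union> P4"
        unfolding P1_def P2_def P3_def P4_def sd_def using Cc Ap by auto
      have i: "infinite P1 \<or> infinite P3" "infinite P2 \<or> infinite P4" "infinite P1 \<or> infinite P2"
        "infinite P3 \<or> infinite P4" "infinite P2 \<or> infinite P3" "infinite P1 \<or> infinite P4"
        using u H Ap Ac by (metis finite_Un)+
      have d: "P1 \<inter> P2 = {}" "P1 \<inter> P3 = {}" "P1 \<inter> P4 = {}" "P2 \<inter> P3 = {}" "P2 \<inter> P4 = {}" "P3 \<inter> P4 = {}"
        unfolding P1_def P2_def P3_def P4_def by auto
      have cc: "card (ends G) \<le> 2" using c by simp
      from i have "(infinite P1 \<and> infinite P2 \<and> infinite P3) \<or> (infinite P1 \<and> infinite P2 \<and> infinite P4)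
        \<or> (infinite P1 \<and> infinite P3 \<and> infinite P4) \<or> (infinite P2 \<and> infinite P3 \<and> infinite P4)" by blast
      thus False
        using three_ends_False[OF fin cc] a d by metis
    qed
  qed
  show ?thesis using Ap Ac four by blast
qed

end


definition Hs :: "('a, 'b) monoid_scheme \<Rightarrow> 'a set \<Rightarrow> 'a set" where
  "Hs G E = {g \<in> carrier G. finite (sd (lm G g E) E)}"
definition eps :: "('a, 'b) monoid_scheme \<Rightarrow> 'a set \<Rightarrow> 'a \<Rightarrow> 'a set" where
  "eps G E z = (if z \<in> Hs G E then lm G z E else lm G z (carrier G - E))"
definition bet :: "('a, 'b) monoid_scheme \<Rightarrow> 'a set \<Rightarrow> 'a \<Rightarrow> nat" where
  "bet G E z = card (E - eps G E z)"
definition alp :: "('a, 'b) monoid_scheme \<Rightarrow> 'a set \<Rightarrow> 'a \<Rightarrow> nat" where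
  "alp G E z = card (eps G E z - E)"
definition phi :: "('a, 'b) monoid_scheme \<Rightarrow> 'a set \<Rightarrow> 'a \<Rightarrow> int" where
  "phi G E z = int (alp G E z) - int (bet G E z)"

definition dd :: "'a set \<Rightarrow> 'a set \<Rightarrow> int" where
  "dd P Q = int (card (P - Q)) - int (card (Q - P))"

lemma dd_W:
  assumes "finite W" "sd P Q \<subseteq> W"
  shows "dd P Q = int (card (P \<inter> W)) - int (card (Q \<inter> W))"
proof -
  have "P \<inter> W = (P - Q) \<union> (P \<inter> Q \<inter> W)" "(P - Q) \<inter> (P \<inter> Q \<inter> W) = {}"
    "Q \<inter> W = (Q - P) \<union> (P \<inter> Q \<inter> W)" "(Q - P) \<inter> (P \<inter> Q \<inter> W) = {}"
    using assms(2) by (auto simp: sd_def)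
  moreover have "finite (P - Q)" "finite (Q - P)" "finite (P \<inter> Q \<inter> W)"
    using assms by (auto simp: sd_def intro: finite_subset)
  ultimately have "card (P \<inter> W) = card (P - Q) + card (P \<inter> Q \<inter> W)"
     "card (Q \<inter> W) = card (Q - P) + card (P \<inter> Q \<inter> W)"
    by (metis card_Un_disjoint)+
  thus ?thesis by (simp add: dd_def)
qed

lemma dd_add:
  assumes "finite (sd P Q)" "finite (sd Q R)"
  shows "dd P R = dd P Q + dd Q R"
proof -
  define W where "W = sd P Q \<union> sd Q R"
  have W: "finite W" using assms by (simp add: W_def)
  have "sd P R \<subseteq> W" by (auto simp: W_def sd_def)
  thus ?thesis using dd_W[OF W] W_def by (simp add: Un_upper1 Un_upper2)
qed

context group begin

lemma lm_sub: "z \<in> carrier G \<Longrightarrow> P \<subseteq> carrier G \<Longrightarrow> lm G z P \<subseteq> carrier G"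
  by (auto simp: lm_def)

lemma lm_inj: "z \<in> carrier G \<Longrightarrow> inj_on (\<lambda>x. z \<otimes> x) (carrier G)"
  by (auto simp: inj_on_def)

lemma lm_diff: "z \<in> carrier G \<Longrightarrow> P \<subseteq> carrier G \<Longrightarrow> Q \<subseteq> carrier G \<Longrightarrow> lm G z (P - Q) = lm G z P - lm G z Q"
  unfolding lm_def by (auto simp: subset_iff)

lemma lm_compl: assumes "z \<in> carrier G" "P \<subseteq> carrier G"
  shows "lm G z (carrier G - P) = carrier G - lm G z P"
proof
  show "lm G z (carrier G - P) \<subseteq> carrier G - lm G z P"
    using assms lm_diff[of z "carrier G" P] by (auto simp: lm_def)
  show "carrier G - lm G z P \<subseteq> lm G z (carrier G - P)"
  proof
    fix y assume y: "y \<in> carrier G - lm G z P"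
    have e: "y = z \<otimes> (inv z \<otimes> y)" using y assms by (simp add: m_assoc[symmetric])
    hence "inv z \<otimes> y \<notin> P" using y by (metis DiffD2 image_eqI lm_def)
    thus "y \<in> lm G z (carrier G - P)" using e y assms unfolding lm_def by blast
  qed
qed

lemma lm_sd: "z \<in> carrier G \<Longrightarrow> P \<subseteq> carrier G \<Longrightarrow> Q \<subseteq> carrier G \<Longrightarrow> lm G z (sd P Q) = sd (lm G z P) (lm G z Q)"
  unfolding sd_def by (simp add: lm_diff image_Un lm_def[of G z "_ \<union> _"] lm_def[symmetric])

lemma lm_mult: "z \<in> carrier G \<Longrightarrow> w \<in> carrier G \<Longrightarrow> P \<subseteq> carrier G \<Longrightarrow> lm G (z \<otimes> w) P = lm G z (lm G w P)"
  unfolding lm_def by (auto simp: m_assoc subset_iff image_iff)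

lemma lm_one: "P \<subseteq> carrier G \<Longrightarrow> lm G \<one> P = P"
  unfolding lm_def by (auto simp: subset_iff)

lemma card_lm: "z \<in> carrier G \<Longrightarrow> P \<subseteq> carrier G \<Longrightarrow> card (lm G z P) = card P"
  unfolding lm_def by (meson card_image inj_on_subset lm_inj)

lemma finite_lm: "z \<in> carrier G \<Longrightarrow> P \<subseteq> carrier G \<Longrightarrow> finite (lm G z P) \<longleftrightarrow> finite P"
  unfolding lm_def by (meson finite_image_iff inj_on_subset lm_inj)

lemma rm_lm: "z \<in> carrier G \<Longrightarrow> s \<in> carrier G \<Longrightarrow> P \<subseteq> carrier G \<Longrightarrow> rm G (lm G z P) s = lm G z (rm G P s)"
  unfolding lm_def rm_def by (auto simp: m_assoc subset_iff image_iff)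

lemma ari_lm: assumes "ari G P" "z \<in> carrier G" shows "ari G (lm G z P)"
  unfolding ari_def
proof (intro conjI ballI)
  have P: "P \<subseteq> carrier G" using assms by (simp add: ari_def)
  show "lm G z P \<subseteq> carrier G" using lm_sub assms P by simp
  fix s assume s: "s \<in> carrier G"
  have "sd (rm G (lm G z P) s) (lm G z P) = lm G z (sd (rm G P s) P)"
    using rm_lm[OF assms(2) s P] lm_sd[OF assms(2) rm_sub[OF P s] P] by simp
  thus "finite (sd (rm G (lm G z P) s) (lm G z P))"
    using assms s by (simp add: ari_def lm_def)
qed

lemma dd_lm: assumes "z \<in> carrier G" "P \<subseteq> carrier G" "Q \<subseteq> carrier G"
  shows "dd (lm G z P) (lm G z Q) = dd P Q"
proof -
  have "P - Q \<subseteq> carrier G" "Q - P \<subseteq> carrier G" using assms by auto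
  thus ?thesis unfolding dd_def using assms by (simp add: lm_diff[symmetric] card_lm)
qed

end



lemma eqf_congr: "finite (sd P Q) \<Longrightarrow> finite (sd P R) \<longleftrightarrow> finite (sd Q R)"
  using eqf_trans eqf_sym by blast

lemma infinite_evens: "infinite {n::nat. even n}"
proof -
  have "range (\<lambda>n::nat. 2*n) \<subseteq> {n. even n}" by auto
  moreover have "infinite (range (\<lambda>n::nat. 2*n))" by (simp add: finite_image_iff inj_on_def)
  ultimately show ?thesis using finite_subset by blast
qed

lemma infinite_odds: "infinite {n::nat. odd n}"
proof -
  have "range (\<lambda>n::nat. 2*n+1) \<subseteq> {n. odd n}" by auto
  moreover have "infinite (range (\<lambda>n::nat. 2*n+1))" by (simp add: finite_image_iff inj_on_def)
  ultimately show ?thesis using finite_subset by blast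
qed

locale twoend = group G for G (structure) +
  fixes E
  assumes ariE: "ari G E" and infE: "infinite E" and infC: "infinite (carrier G - E)"
    and four: "\<And>A. ari G A \<Longrightarrow> finite A \<or> finite (carrier G - A) \<or> finite (sd A E) \<or> finite (sd A (carrier G - E))"
begin

lemma Ec: "E \<subseteq> carrier G" using ariE by (simp add: ari_def)

lemma infG: "infinite (carrier G)" using infE Ec finite_subset by blast

lemma not_both: "finite (sd P E) \<Longrightarrow> finite (sd P (carrier G - E)) \<Longrightarrow> False"
proof -
  assume "finite (sd P E)" "finite (sd P (carrier G - E))"
  hence "finite (sd E (carrier G - E))" using eqf_trans eqf_sym by blast
  moreover have "sd E (carrier G - E) = carrier G" using Ec by (auto simp: sd_def)
  ultimately show False using infG by simp
qed

lemma lmE_cases: assumes z: "z \<in> carrier G"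
  shows "finite (sd (lm G z E) E) \<or> finite (sd (lm G z E) (carrier G - E))"
proof -
  have a: "ari G (lm G z E)" using ari_lm[OF ariE z] .
  have "infinite (lm G z E)" using finite_lm[OF z Ec] infE by simp
  moreover have "infinite (carrier G - lm G z E)"
    using lm_compl[OF z Ec] finite_lm[OF z, of "carrier G - E"] infC by auto
  ultimately show ?thesis using four[OF a] by blast
qed

lemma sdC: assumes z: "z \<in> carrier G"
  shows "sd (lm G z (carrier G - E)) E = sd (lm G z E) (carrier G - E)"
proof -
  have "lm G z (carrier G - E) = carrier G - lm G z E" using lm_compl[OF z Ec] .
  moreover have "sd (carrier G - lm G z E) (carrier G - (carrier G - E)) = sd (lm G z E) (carrier G - E)"
     using sd_compl lm_sub[OF z Ec] by blast
  moreover have "carrier G - (carrier G - E) = E" using Ec by blast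
  ultimately show ?thesis by simp
qed

lemma lmC_iff: assumes z: "z \<in> carrier G"
  shows "finite (sd (lm G z (carrier G - E)) E) \<longleftrightarrow> z \<notin> Hs G E"
  using sdC[OF z] lmE_cases[OF z] not_both[of "lm G z E"] z by (auto simp: Hs_def)

lemma one_H: "\<one> \<in> Hs G E"
  using lm_one[OF Ec] by (simp add: Hs_def sd_def)

lemma eps_sub: "z \<in> carrier G \<Longrightarrow> eps G E z \<subseteq> carrier G"
  unfolding eps_def using lm_sub Ec by auto

lemma eps_eqf: "z \<in> carrier G \<Longrightarrow> finite (sd (eps G E z) E)"
  unfolding eps_def using lmC_iff by (auto simp: Hs_def)

lemma H_mult_iff: assumes z: "z \<in> carrier G" and s: "s \<in> carrier G"
  shows "z \<otimes> s \<in> Hs G E \<longleftrightarrow> (z \<in> Hs G E \<longleftrightarrow> s \<in> Hs G E)"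
proof (cases "s \<in> Hs G E")
  case True
  have sub: "sd (lm G s E) E \<subseteq> carrier G" using lm_sub[OF s Ec] Ec by (auto simp: sd_def)
  have "finite (sd (lm G s E) E)" using True by (simp add: Hs_def)
  hence "finite (lm G z (sd (lm G s E) E))" using finite_lm[OF z sub] by simp
  moreover have "lm G z (sd (lm G s E) E) = sd (lm G (z \<otimes> s) E) (lm G z E)"
    using lm_sd[OF z lm_sub[OF s Ec] Ec] lm_mult[OF z s Ec] by simp
  ultimately have "finite (sd (lm G (z \<otimes> s) E) (lm G z E))" by simp
  hence "finite (sd (lm G (z \<otimes> s) E) E) \<longleftrightarrow> finite (sd (lm G z E) E)"
    using eqf_congr by blast
  thus ?thesis using True z s by (simp add: Hs_def)
next
  case False
  have "finite (sd (lm G s E) (carrier G - E))" using lmC_iff[OF s] sdC[OF s] False by simp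
  moreover have sub: "sd (lm G s E) (carrier G - E) \<subseteq> carrier G" using lm_sub[OF s Ec] by (auto simp: sd_def)
  ultimately have "finite (lm G z (sd (lm G s E) (carrier G - E)))" using finite_lm[OF z sub] by simp
  hence "finite (sd (lm G (z \<otimes> s) E) (lm G z (carrier G - E)))"
    using lm_mult[OF z s Ec] lm_sd[OF z lm_sub[OF s Ec], of "carrier G - E"] by simp
  hence "finite (sd (lm G (z \<otimes> s) E) E) \<longleftrightarrow> finite (sd (lm G z (carrier G - E)) E)"
    using eqf_congr by blast
  thus ?thesis using False z s lmC_iff[OF z] by (simp add: Hs_def)
qed


lemma eps_H: "z \<in> Hs G E \<Longrightarrow> eps G E z = lm G z E"
  by (simp add: eps_def)

lemma eps_mult_eq: assumes z: "z \<in> carrier G" and s: "s \<in> carrier G"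
  shows "eps G E (z \<otimes> s) = lm G z (if z \<in> Hs G E then eps G E s else carrier G - eps G E s)"
proof -
  have lsE: "lm G s E \<subseteq> carrier G" using lm_sub[OF s Ec] .
  have lsC: "lm G s (carrier G - E) = carrier G - lm G s E" using lm_compl[OF s Ec] .
  have lsE': "lm G s E = carrier G - lm G s (carrier G - E)" using lsC lsE by blast
  show ?thesis
  proof (cases "z \<in> Hs G E"; cases "s \<in> Hs G E")
    assume a: "z \<in> Hs G E" "s \<in> Hs G E"
    hence "z \<otimes> s \<in> Hs G E" using H_mult_iff[OF z s] by simp
    thus ?thesis using a lm_mult[OF z s Ec] by (simp add: eps_def)
  next
    assume a: "z \<in> Hs G E" "s \<notin> Hs G E"
    hence "z \<otimes> s \<notin> Hs G E" using H_mult_iff[OF z s] by simp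
    thus ?thesis using a lm_mult[OF z s, of "carrier G - E"] by (simp add: eps_def)
  next
    assume a: "z \<notin> Hs G E" "s \<in> Hs G E"
    hence "z \<otimes> s \<notin> Hs G E" using H_mult_iff[OF z s] by simp
    thus ?thesis using a lm_mult[OF z s, of "carrier G - E"] lsC by (simp add: eps_def)
  next
    assume a: "z \<notin> Hs G E" "s \<notin> Hs G E"
    hence "z \<otimes> s \<in> Hs G E" using H_mult_iff[OF z s] by simp
    thus ?thesis using a lm_mult[OF z s Ec] lsE' by (simp add: eps_def)
  qed
qed

lemma eps_mult: assumes z: "z \<in> carrier G" and s: "s \<in> carrier G"
  shows "sd (eps G E (z \<otimes> s)) (eps G E z) = lm G z (sd (eps G E s) E)"
proof (cases "z \<in> Hs G E")
  case True
  thus ?thesis using eps_mult_eq[OF z s] lm_sd[OF z eps_sub[OF s] Ec] by (simp add: eps_def)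
next
  case False
  have "sd (carrier G - eps G E s) (carrier G - E) = sd (eps G E s) E"
    using sd_compl[OF eps_sub[OF s] Ec] .
  moreover have "lm G z (sd (carrier G - eps G E s) (carrier G - E)) =
      sd (lm G z (carrier G - eps G E s)) (lm G z (carrier G - E))"
    using lm_sd[OF z] by blast
  ultimately show ?thesis using eps_mult_eq[OF z s] False by (simp add: eps_def)
qed

lemma far: assumes x: "x \<in> carrier G" shows "finite {z \<in> carrier G - E. z \<otimes> x \<in> E}"
proof -
  have "{z \<in> carrier G - E. z \<otimes> x \<in> E} \<subseteq> sd (rm G E (inv x)) E"
  proof
    fix z assume z: "z \<in> {z \<in> carrier G - E. z \<otimes> x \<in> E}"
    have "z = (z \<otimes> x) \<otimes> inv x" using z x by (simp add: m_assoc)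
    hence "z \<in> rm G E (inv x)" using z unfolding rm_def by blast
    thus "z \<in> sd (rm G E (inv x)) E" using z by (simp add: sd_def)
  qed
  moreover have "finite (sd (rm G E (inv x)) E)" using ariE x by (simp add: ari_def)
  ultimately show ?thesis by (rule finite_subset)
qed

lemma bet_inv: assumes s: "s \<in> carrier G"
  shows "finite {z \<in> carrier G - E. bet G E (z \<otimes> s) \<noteq> bet G E z}"
proof -
  define D where "D = sd (eps G E s) E"
  have Dfin: "finite D" using eps_eqf[OF s] by (simp add: D_def)
  have Dc: "D \<subseteq> carrier G" using eps_sub[OF s] Ec by (auto simp: D_def sd_def)
  have "{z \<in> carrier G - E. bet G E (z \<otimes> s) \<noteq> bet G E z} \<subseteq> (\<Union>d\<in>D. {z \<in> carrier G - E. z \<otimes> d \<in> E})"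
  proof
    fix z assume z: "z \<in> {z \<in> carrier G - E. bet G E (z \<otimes> s) \<noteq> bet G E z}"
    show "z \<in> (\<Union>d\<in>D. {z \<in> carrier G - E. z \<otimes> d \<in> E})"
    proof (rule ccontr)
      assume "z \<notin> (\<Union>d\<in>D. {z \<in> carrier G - E. z \<otimes> d \<in> E})"
      hence "lm G z D \<inter> E = {}" using z by (auto simp: lm_def)
      moreover have "sd (eps G E (z \<otimes> s)) (eps G E z) = lm G z D"
        using eps_mult[OF _ s] z by (simp add: D_def)
      ultimately have "E - eps G E (z \<otimes> s) = E - eps G E z" by (auto simp: sd_def)
      thus False using z by (simp add: bet_def)
    qed
  qed
  thus ?thesis using Dfin Dc far by (meson finite_UN_I finite_subset subsetD)
qed

definition AJ :: "nat set \<Rightarrow> 'a set" where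
  "AJ J = {z \<in> carrier G - E. bet G E z \<in> J}"

lemma ari_AJ: "ari G (AJ J)"
  unfolding ari_def
proof (intro conjI ballI)
  show "AJ J \<subseteq> carrier G" by (auto simp: AJ_def)
  fix s assume s: "s \<in> carrier G"
  define Bad where "Bad = (\<lambda>t. {z \<in> carrier G - E. bet G E (z \<otimes> t) \<noteq> bet G E z} \<union> {z \<in> carrier G - E. z \<otimes> t \<in> E})"
  have Bf: "\<And>t. t \<in> carrier G \<Longrightarrow> finite (Bad t)" unfolding Bad_def using bet_inv far by simp
  have good: "\<And>t a. t \<in> carrier G \<Longrightarrow> a \<in> AJ J \<Longrightarrow> a \<notin> Bad t \<Longrightarrow> a \<otimes> t \<in> AJ J"
    unfolding Bad_def AJ_def by auto
  have "sd (rm G (AJ J) s) (AJ J) \<subseteq> rm G (Bad s) s \<union> Bad (inv s)"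
  proof
    fix y assume y: "y \<in> sd (rm G (AJ J) s) (AJ J)"
    show "y \<in> rm G (Bad s) s \<union> Bad (inv s)"
    proof (cases "y \<in> AJ J")
      case True
      have yc: "y \<in> carrier G" using True by (simp add: AJ_def)
      have "y \<notin> rm G (AJ J) s" using y True by (simp add: sd_def)
      moreover have "y = (y \<otimes> inv s) \<otimes> s" using yc s by (simp add: m_assoc)
      ultimately have "y \<otimes> inv s \<notin> AJ J" unfolding rm_def by (metis image_eqI)
      hence "y \<in> Bad (inv s)" using good[of "inv s" y] True s by auto
      thus ?thesis by simp
    next
      case False
      then obtain a where a: "a \<in> AJ J" "y = a \<otimes> s" using y by (auto simp: sd_def rm_def)
      hence "a \<in> Bad s" using good[OF s a(1)] False by auto
      thus ?thesis using a unfolding rm_def by blast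
    qed
  qed
  moreover have "finite (rm G (Bad s) s \<union> Bad (inv s))" using Bf s by (simp add: rm_def)
  ultimately show "finite (sd (rm G (AJ J) s) (AJ J))" by (rule finite_subset)
qed

lemma AJ_dich: "finite (AJ J) \<or> finite (carrier G - E - AJ J)"
proof -
  have sub: "AJ J \<subseteq> carrier G - E" by (auto simp: AJ_def)
  have "E \<subseteq> carrier G - AJ J" using sub Ec by auto
  hence n1: "infinite (carrier G - AJ J)" using infE finite_subset by blast
  have "E \<subseteq> sd (AJ J) E" using sub by (auto simp: sd_def)
  hence n2: "infinite (sd (AJ J) E)" using infE finite_subset by blast
  have "sd (AJ J) (carrier G - E) = carrier G - E - AJ J" using sub by (auto simp: sd_def)
  thus ?thesis using four[OF ari_AJ[of J]] n1 n2 by auto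
qed

lemma bet_fin: "finite (bet G E ` (carrier G - E))"
proof (rule ccontr)
  define V where "V = bet G E ` (carrier G - E)"
  assume "infinite (bet G E ` (carrier G - E))"
  hence V: "infinite V" by (simp add: V_def)
  define J where "J = enumerate V ` {n. even n}"
  have inj: "inj (enumerate V)" using strict_mono_enumerate[OF V] strict_mono_imp_inj_on by blast
  have JV: "J \<subseteq> V" using enumerate_in_set[OF V] by (auto simp: J_def)
  have "infinite {n::nat. even n}" using infinite_evens .
  hence Ji: "infinite J" unfolding J_def using inj by (simp add: finite_image_iff inj_on_subset)
  have "infinite {n::nat. odd n}" using infinite_odds .
  hence Oi: "infinite (enumerate V ` {n. odd n})" using inj by (simp add: finite_image_iff inj_on_subset)
  have OV: "enumerate V ` {n. odd n} \<subseteq> V - J"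
    using enumerate_in_set[OF V] inj unfolding J_def inj_def by auto
  have "bet G E ` AJ J = J" using JV by (auto simp: AJ_def V_def)
  hence "infinite (AJ J)" using Ji by (metis finite_imageI)
  moreover have "V - J \<subseteq> bet G E ` (carrier G - E - AJ J)" by (auto simp: AJ_def V_def)
  hence "infinite (carrier G - E - AJ J)" using Oi OV by (metis finite_imageI finite_subset)
  ultimately show False using AJ_dich by blast
qed


lemma alp_large: "finite {z \<in> carrier G - E. alp G E z < n}"
proof -
  obtain Xs where Xs: "finite Xs" "card Xs = n" "Xs \<subseteq> E" using infinite_arbitrarily_large[OF infE] by blast
  obtain Y where Y: "finite Y" "card Y = n" "Y \<subseteq> carrier G - E" using infinite_arbitrarily_large[OF infC] by blast
  define Ex where "Ex = (\<Union>x\<in>Xs \<union> Y. {z \<in> carrier G - E. z \<otimes> x \<in> E})"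
  have "finite Ex" unfolding Ex_def using Xs Y Ec far by blast
  moreover have "{z \<in> carrier G - E. alp G E z < n} \<subseteq> Ex"
  proof
    fix z assume z: "z \<in> {z \<in> carrier G - E. alp G E z < n}"
    show "z \<in> Ex"
    proof (rule ccontr)
      assume nz: "z \<notin> Ex"
      have zc: "z \<in> carrier G" using z by simp
      have fin: "finite (eps G E z - E)" using eps_eqf[OF zc] by (auto simp: sd_def intro: finite_subset)
      have "n \<le> alp G E z"
      proof (cases "z \<in> Hs G E")
        case True
        have "lm G z Xs \<subseteq> eps G E z - E"
          using True nz z Xs unfolding Ex_def eps_def lm_def by auto
        hence "card (lm G z Xs) \<le> alp G E z" using fin by (simp add: alp_def card_mono)
        thus ?thesis using card_lm[OF zc] Xs Ec by auto
      next
        case False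
        have "lm G z Y \<subseteq> eps G E z - E"
          using False nz z Y unfolding Ex_def eps_def lm_def by auto
        hence "card (lm G z Y) \<le> alp G E z" using fin by (simp add: alp_def card_mono)
        moreover have "card (lm G z Y) = card Y" using card_lm[OF zc] Y by auto
        ultimately show ?thesis using Y by simp
      qed
      thus False using z by simp
    qed
  qed
  ultimately show ?thesis by (rule finite_subset[rotated])
qed

lemma phi_C: "finite {z \<in> carrier G - E. phi G E z \<le> n}"
proof -
  define M where "M = Max (bet G E ` (carrier G - E))"
  have bM: "\<And>z. z \<in> carrier G - E \<Longrightarrow> bet G E z \<le> M" unfolding M_def using bet_fin by simp
  have "{z \<in> carrier G - E. phi G E z \<le> n} \<subseteq> {z \<in> carrier G - E. alp G E z < nat (n + int M) + 1}"
  proof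
    fix z assume z: "z \<in> {z \<in> carrier G - E. phi G E z \<le> n}"
    hence "int (alp G E z) \<le> n + int M" using bM[of z] by (simp add: phi_def)
    thus "z \<in> {z \<in> carrier G - E. alp G E z < nat (n + int M) + 1}" using z by auto
  qed
  thus ?thesis using alp_large finite_subset by blast
qed

lemma H_sub: "Hs G E \<subseteq> carrier G" by (auto simp: Hs_def)

lemma H_subgroup: "subgroup (Hs G E) G"
proof (rule subgroupI)
  show "Hs G E \<subseteq> carrier G" by (rule H_sub)
  show "Hs G E \<noteq> {}" using one_H by blast
  fix a assume a: "a \<in> Hs G E"
  hence ac: "a \<in> carrier G" using H_sub by blast
  have "a \<otimes> inv a \<in> Hs G E" using ac one_H by simp
  thus "inv a \<in> Hs G E" using H_mult_iff[OF ac inv_closed[OF ac]] a by simp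
next
  fix a b assume "a \<in> Hs G E" "b \<in> Hs G E"
  thus "a \<otimes> b \<in> Hs G E" using H_mult_iff H_sub by blast
qed

lemma phi_dd: "phi G E z = dd (eps G E z) E"
  by (simp add: phi_def dd_def alp_def bet_def)

lemma phi_mult: assumes z: "z \<in> Hs G E" and w: "w \<in> carrier G"
  shows "phi G E (z \<otimes> w) = phi G E z + phi G E w"
proof -
  have zc: "z \<in> carrier G" using z H_sub by blast
  have e: "eps G E (z \<otimes> w) = lm G z (eps G E w)" using eps_mult_eq[OF zc w] z by simp
  have f1: "finite (sd (lm G z (eps G E w)) (lm G z E))"
    using lm_sd[OF zc eps_sub[OF w] Ec] finite_lm[OF zc] eps_eqf[OF w] eps_sub[OF w] Ec
    by (metis Diff_subset Un_subset_iff sd_def order_trans)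
  have f2: "finite (sd (lm G z E) E)" using z by (simp add: Hs_def)
  have "phi G E (z \<otimes> w) = dd (lm G z (eps G E w)) (lm G z E) + dd (lm G z E) E"
    using dd_add[OF f1 f2] e by (simp add: phi_dd)
  also have "\<dots> = phi G E w + phi G E z"
    using dd_lm[OF zc eps_sub[OF w] Ec] z by (simp add: phi_dd eps_def)
  finally show ?thesis by simp
qed

lemma phi_one: "phi G E \<one> = 0"
  using one_H lm_one[OF Ec] by (simp add: phi_dd eps_def dd_def)

end

lemma (in twoend) twoend_compl: "twoend G (carrier G - E)"
proof
  show "ari G (carrier G - E)" using ari_compl[OF ariE] .
  show "infinite (carrier G - E)" using infC .
  show "infinite (carrier G - (carrier G - E))" using infE Ec by (simp add: double_diff)
  fix A assume A: "ari G A"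
  have "carrier G - (carrier G - E) = E" using Ec by blast
  thus "finite A \<or> finite (carrier G - A) \<or> finite (sd A (carrier G - E)) \<or> finite (sd A (carrier G - (carrier G - E)))"
    using four[OF A] by auto
qed

context twoend begin

lemma Hs_compl: "Hs G (carrier G - E) = Hs G E"
proof -
  have "\<And>z. z \<in> carrier G \<Longrightarrow> sd (lm G z (carrier G - E)) (carrier G - E) = sd (lm G z E) E"
    using lm_compl[OF _ Ec] sd_compl lm_sub Ec by metis
  thus ?thesis by (auto simp: Hs_def)
qed

lemma eps_compl: "z \<in> carrier G \<Longrightarrow> eps G (carrier G - E) z = carrier G - eps G E z"
  using Hs_compl lm_compl[OF _ Ec] lm_sub[OF _ Ec] Ec
  by (auto simp: eps_def double_diff)

lemma phi_compl: assumes z: "z \<in> carrier G" shows "phi G (carrier G - E) z = - phi G E z"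
proof -
  have a: "(carrier G - eps G E z) - (carrier G - E) = E - eps G E z" using Ec by blast
  have b: "(carrier G - E) - (carrier G - eps G E z) = eps G E z - E" using eps_sub[OF z] by blast
  show ?thesis using a b eps_compl[OF z] by (simp add: phi_def alp_def bet_def)
qed

lemma phi_fin: "finite {z \<in> carrier G. \<bar>phi G E z\<bar> \<le> n}"
proof -
  interpret C: twoend G "carrier G - E" by (rule twoend_compl)
  have f1: "finite {z \<in> carrier G - E. phi G E z \<le> n}" by (rule phi_C)
  have f2: "finite {z \<in> carrier G - (carrier G - E). phi G (carrier G - E) z \<le> n}" by (rule C.phi_C)
  have "{z \<in> carrier G. \<bar>phi G E z\<bar> \<le> n} \<subseteq> {z \<in> carrier G - E. phi G E z \<le> n} \<union> {z \<in> carrier G - (carrier G - E). phi G (carrier G - E) z \<le> n}"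
    using phi_compl by auto
  thus ?thesis using f1 f2 by (meson finite_UnI finite_subset)
qed


lemma phi_inv: assumes z: "z \<in> Hs G E" shows "phi G E (inv z) = - phi G E z"
proof -
  have zc: "z \<in> carrier G" using z H_sub by blast
  have "phi G E (z \<otimes> inv z) = phi G E z + phi G E (inv z)" using phi_mult[OF z inv_closed[OF zc]] .
  moreover have "z \<otimes> inv z = \<one>" using zc by simp
  ultimately show ?thesis using phi_one by simp
qed

lemma H_pow: "h \<in> Hs G E \<Longrightarrow> h [^] (q::int) \<in> Hs G E"
  by (rule subgroup_int_pow_closed[OF H_subgroup])

lemma phi_pow_nat: assumes h: "h \<in> Hs G E" shows "phi G E (h [^] (n::nat)) = int n * phi G E h"
proof (induction n)
  case 0 thus ?case using phi_one by simp
next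
  case (Suc n)
  have hn: "h [^] n \<in> Hs G E" using H_pow[OF h, of "int n"] by (simp add: int_pow_int)
  have hc: "h \<in> carrier G" using h H_sub by blast
  have "h [^] Suc n = h [^] n \<otimes> h" by simp
  hence "phi G E (h [^] Suc n) = phi G E (h [^] n) + phi G E h" using phi_mult[OF hn hc] by simp
  also have "\<dots> = int n * phi G E h + phi G E h" using Suc by simp
  also have "\<dots> = int (Suc n) * phi G E h" by (simp add: distrib_right)
  finally show ?case .
qed

lemma phi_pow: assumes h: "h \<in> Hs G E" shows "phi G E (h [^] (q::int)) = q * phi G E h"
proof (cases "q < 0")
  case True
  have "h [^] (int (nat (-q))) \<in> Hs G E" by (rule H_pow[OF h])
  hence hn: "h [^] nat (-q) \<in> Hs G E" by (simp only: int_pow_int)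
  have e: "h [^] q = inv (h [^] nat (-q))" using True int_pow_def2[of G h q] by simp
  have "phi G E (h [^] q) = - phi G E (h [^] nat (-q))" using e phi_inv[OF hn] by simp
  also have "\<dots> = - (int (nat (-q)) * phi G E h)" using phi_pow_nat[OF h, of "nat (-q)"] by simp
  also have "\<dots> = q * phi G E h" using True by simp
  finally show ?thesis .
next
  case False
  have e: "h [^] q = h [^] nat q" using False int_pow_def2[of G h q] by simp
  have "phi G E (h [^] q) = int (nat q) * phi G E h" using e phi_pow_nat[OF h, of "nat q"] by simp
  thus ?thesis using False by simp
qed

theorem main:
  "(\<exists>S. finite S \<and> S \<subseteq> carrier G \<and> generate G S = carrier G)
     \<and> (\<exists>g\<in>carrier G. infinite (generate G {g}) \<and> finite (rcosets (generate G {g})))"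
proof -
  define H where "H = Hs G E"
  define K where "K = {z \<in> H. phi G E z = 0}"
  have HG: "H \<subseteq> carrier G" using H_sub by (simp add: H_def)
  have "K \<subseteq> {z \<in> carrier G. \<bar>phi G E z\<bar> \<le> 0}" using HG by (auto simp: K_def)
  hence Kfin: "finite K" using phi_fin[of 0] finite_subset by blast
  have KH: "K \<subseteq> H" by (auto simp: K_def)
  obtain \<tau> where tau: "\<tau> \<in> carrier G" "\<And>y. y \<in> carrier G \<Longrightarrow> y \<in> H \<or> y \<otimes> inv \<tau> \<in> H"
  proof (cases "carrier G \<subseteq> H")
    case True
    show ?thesis
    proof (rule that[of \<one>])
      show "\<one> \<in> carrier G" by simp
      fix y assume "y \<in> carrier G" thus "y \<in> H \<or> y \<otimes> inv \<one> \<in> H" using True by blast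
    qed
  next
    case False
    then obtain t where t: "t \<in> carrier G" "t \<notin> H" by blast
    have it: "inv t \<notin> H" using t H_subgroup subgroup.m_inv_closed H_def by fastforce
    show ?thesis
    proof (rule that[of t])
      show "t \<in> carrier G" using t by simp
      fix y assume y: "y \<in> carrier G"
      show "y \<in> H \<or> y \<otimes> inv t \<in> H" using H_mult_iff[OF y inv_closed[OF t(1)]] it H_def by auto
    qed
  qed
  have Hinf: "infinite H"
  proof
    assume fH: "finite H"
    have "carrier G \<subseteq> H \<union> (\<lambda>x. x \<otimes> \<tau>) ` H"
    proof
      fix y assume y: "y \<in> carrier G"
      show "y \<in> H \<union> (\<lambda>x. x \<otimes> \<tau>) ` H"
      proof (cases "y \<in> H")
        case False
        hence "y \<otimes> inv \<tau> \<in> H" using tau y by blast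
        moreover have "y = (y \<otimes> inv \<tau>) \<otimes> \<tau>" using y tau by (simp add: m_assoc)
        ultimately show ?thesis by blast
      qed simp
    qed
    moreover have "finite (H \<union> (\<lambda>x. x \<otimes> \<tau>) ` H)" using fH by simp
    ultimately show False using infG finite_subset by blast
  qed
  obtain z where z: "z \<in> H" "phi G E z \<noteq> 0"
  proof -
    have "\<not> H \<subseteq> {z \<in> carrier G. \<bar>phi G E z\<bar> \<le> 0}" using Hinf phi_fin[of 0] finite_subset by blast
    then obtain w where "w \<in> H" "\<not> \<bar>phi G E w\<bar> \<le> 0" using HG by blast
    thus ?thesis using that by simp
  qed
  have ex: "\<exists>n::nat. 0 < n \<and> (\<exists>h\<in>H. phi G E h = int n)"
  proof (cases "phi G E z > 0")
    case True thus ?thesis using z by (intro exI[of _ "nat (phi G E z)"]) auto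
  next
    case False
    have "inv z \<in> H" using z H_subgroup subgroup.m_inv_closed H_def by fastforce
    moreover have "phi G E (inv z) = - phi G E z" using phi_inv z H_def by simp
    ultimately show ?thesis using False z by (intro exI[of _ "nat (- phi G E z)"]) auto
  qed
  define d where "d = (LEAST n::nat. 0 < n \<and> (\<exists>h\<in>H. phi G E h = int n))"
  have dp: "0 < d \<and> (\<exists>h\<in>H. phi G E h = int d)" unfolding d_def by (rule LeastI_ex[OF ex])
  then obtain h where h: "h \<in> H" "phi G E h = int d" and d0: "0 < d" by blast
  have hc: "h \<in> carrier G" using h HG by blast
  have dmin: "\<And>w. w \<in> H \<Longrightarrow> 0 < phi G E w \<Longrightarrow> int d \<le> phi G E w"
  proof -
    fix w assume w: "w \<in> H" "0 < phi G E w"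
    have "d \<le> nat (phi G E w)" unfolding d_def using w by (intro Least_le) auto
    thus "int d \<le> phi G E w" using w by simp
  qed
  have decH: "\<And>y. y \<in> H \<Longrightarrow> \<exists>q k. k \<in> K \<and> y = h [^] (q::int) \<otimes> k"
  proof -
    fix y assume y: "y \<in> H"
    have yc: "y \<in> carrier G" using y HG by blast
    define q where "q = phi G E y div int d"
    define k where "k = inv (h [^] q) \<otimes> y"
    have hq: "h [^] q \<in> H" using H_pow h H_def by simp
    have ihq: "inv (h [^] q) \<in> H" using hq H_subgroup subgroup.m_inv_closed H_def by fastforce
    have kH: "k \<in> H" unfolding k_def using ihq y H_subgroup subgroup.m_closed H_def by fastforce
    have "phi G E k = phi G E y - q * int d"
      unfolding k_def using phi_mult[of "inv (h [^] q)" y] ihq yc phi_inv hq phi_pow h H_def by simp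
    hence pk: "phi G E k = phi G E y mod int d" unfolding q_def by (simp add: minus_div_mult_eq_mod)
    have "phi G E k = 0"
    proof (rule ccontr)
      assume "phi G E k \<noteq> 0"
      hence "0 < phi G E k" using pk d0 by (simp add: order_le_neq_trans)
      hence "int d \<le> phi G E k" using dmin kH by blast
      moreover have "phi G E k < int d" using pk d0 by simp
      ultimately show False by simp
    qed
    hence "k \<in> K" using kH by (simp add: K_def)
    moreover have "y = h [^] q \<otimes> k" unfolding k_def using hc yc by (simp add: m_assoc[symmetric])
    ultimately show "\<exists>q k. k \<in> K \<and> y = h [^] (q::int) \<otimes> k" by blast
  qed
  define R where "R = K \<union> (\<lambda>k. k \<otimes> \<tau>) ` K"
  have Rfin: "finite R" using Kfin by (simp add: R_def)
  have RG: "R \<subseteq> carrier G" using KH HG tau by (auto simp: R_def)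
  have dec: "\<And>y. y \<in> carrier G \<Longrightarrow> \<exists>q r. r \<in> R \<and> y = h [^] (q::int) \<otimes> r"
  proof -
    fix y assume y: "y \<in> carrier G"
    show "\<exists>q r. r \<in> R \<and> y = h [^] (q::int) \<otimes> r"
    proof (cases "y \<in> H")
      case True thus ?thesis using decH by (auto simp: R_def)
    next
      case False
      hence "y \<otimes> inv \<tau> \<in> H" using tau y by blast
      then obtain q k where qk: "k \<in> K" "y \<otimes> inv \<tau> = h [^] (q::int) \<otimes> k" using decH by blast
      have kc: "k \<in> carrier G" using qk KH HG by blast
      have "y = (y \<otimes> inv \<tau>) \<otimes> \<tau>" using y tau by (simp add: m_assoc)
      also have "\<dots> = h [^] q \<otimes> (k \<otimes> \<tau>)" using qk kc hc tau by (simp add: m_assoc)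
      finally show ?thesis using qk by (auto simp: R_def)
    qed
  qed
  define Gh where "Gh = generate G {h}"
  have sgh: "subgroup Gh G" unfolding Gh_def using generate_is_subgroup hc by simp
  have powGh: "\<And>q::int. h [^] q \<in> Gh" unfolding Gh_def using generate_pow[OF hc] by blast
  have "rcosets Gh \<subseteq> (\<lambda>r. Gh #> r) ` R"
  proof
    fix M assume "M \<in> rcosets Gh"
    then obtain a where a: "a \<in> carrier G" "M = Gh #> a" unfolding RCOSETS_def by blast
    obtain q r where qr: "r \<in> R" "a = h [^] (q::int) \<otimes> r" using dec a by blast
    have "a \<in> Gh #> r" unfolding r_coset_def using qr powGh by blast
    hence "Gh #> r = Gh #> a" using repr_independence qr RG sgh by blast
    thus "M \<in> (\<lambda>r. Gh #> r) ` R" using a qr by blast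
  qed
  moreover have "finite ((\<lambda>r. Gh #> r) ` R)" using Rfin by simp
  ultimately have fr: "finite (rcosets Gh)" using finite_subset by blast
  have injq: "inj (\<lambda>q::int. h [^] q)"
  proof (rule injI)
    fix q1 q2 :: int assume "h [^] q1 = h [^] q2"
    hence "phi G E (h [^] q1) = phi G E (h [^] q2)" by simp
    hence "q1 * int d = q2 * int d" using phi_pow[of h q1] phi_pow[of h q2] h by (auto simp: H_def)
    thus "q1 = q2" using d0 by simp
  qed
  have "infinite (range (\<lambda>q::int. h [^] q))" using injq by (simp add: finite_image_iff)
  moreover have "range (\<lambda>q::int. h [^] q) \<subseteq> Gh" using powGh by blast
  ultimately have infGh: "infinite Gh" using finite_subset by blast
  have gen: "generate G (insert h R) = carrier G"
  proof
    show "generate G (insert h R) \<subseteq> carrier G" using generate_incl RG hc by simp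
    show "carrier G \<subseteq> generate G (insert h R)"
    proof
      fix y assume y: "y \<in> carrier G"
      obtain q r where qr: "r \<in> R" "y = h [^] (q::int) \<otimes> r" using dec y by blast
      have "h [^] q \<in> generate G (insert h R)"
        using powGh mono_generate[of "{h}" "insert h R"] Gh_def by blast
      moreover have "r \<in> generate G (insert h R)" using qr by (simp add: generate.incl)
      ultimately show "y \<in> generate G (insert h R)" using qr by (simp add: generate.eng)
    qed
  qed
  have "finite (insert h R)" "insert h R \<subseteq> carrier G" using Rfin RG hc by auto
  hence c1: "\<exists>S. finite S \<and> S \<subseteq> carrier G \<and> generate G S = carrier G" using gen by blast
  have c2: "\<exists>g\<in>carrier G. infinite (generate G {g}) \<and> finite (rcosets (generate G {g}))"
    using hc infGh fr unfolding Gh_def by blast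
  show ?thesis using c1 c2 by blast
qed

end

theorem theorem9p16:
  fixes G :: "('a, 'b) monoid_scheme"
  assumes "group G"
    and "finite (ends G)" and "card (ends G) = 2"
  shows "(\<exists>S. finite S \<and> S \<subseteq> carrier G \<and> generate G S = carrier G)
     \<and> (\<exists>g\<in>carrier G. infinite (generate G {g}) \<and> finite (rcosets\<^bsub>G\<^esub> (generate G {g})))"
proof -
  interpret group G by (rule assms(1))
  obtain E where E: "ari G E" "infinite E" "infinite (carrier G - E)"
    "\<forall>A. ari G A \<longrightarrow> finite A \<or> finite (carrier G - A) \<or> finite (sd A E) \<or> finite (sd A (carrier G - E))"
    using two_ends_E[OF assms(2,3)] by blast
  interpret T: twoend G E
    by (unfold_locales) (use E in auto)
  show ?thesis by (rule T.main)
qed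

end
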